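(* Let $0=T_0<T_1<\dots<T_N=T$ be a tenor structure with constant $\Delta T=T_k-T_{k-1}$, and let $B(0,T_k)$, $k=0,\dots,N$, be initial zero-coupon bond prices such that all initial Libor rates $L(0,T_k)=\frac{1}{\Delta T}\big(\frac{B(0,T_{k-1})}{B(0,T_k)}-1\big)$, $k=1,\dots,N$, are strictly positive. Let $\Sigma$ be an affine process on $S_d^{++}$ (as in the context) and set $$\gamma_\Sigma:=\sup_{u\in\mathcal I_T\cap S_d^{--}}\mathbb E\big[e^{-\operatorname{tr}[u\Sigma_T]}\big].$$ (i) If $\gamma_\Sigma>\frac{B(0,T_1)}{B(0,T_N)}$, then there exist matrices $u_1\prec u_2\prec\dots\prec u_{N-1}\prec 0$ in $\mathcal I_T\cap S_d^{--}$, and with $u_N:=0$, such that $$M_0^{u_k}=\exp\{-\phi_T(u_k)-\operatorname{tr}[\psi_T(u_k)\Sigma_0]\}=\frac{B(0,T_k)}{B(0,T_N)}\qquad\text{for all }k\in\{1,\dots,N\}.$$ (ii) Conversely, let $u_1\prec\dots\prec u_{N-1}\prec u_N=0$ be such a sequence and let bond prices be modelled by $\frac{B(t,T_k)}{B(t,T_N)}=M^{u_k}_t$ for $t\in[0,T_k]$, $k=1,\dots,N-1$ (so that the initial condition in (i) holds). Then for every $k\in\{1,\dots,N-1\}$ and $t\in[0,T_k]$, $\frac{B(t,T_k)}{B(t,T_{k+1})}>1$ almost surely, i.e. the Libor rates $\frac1{\Delta T}\big(\frac{B(t,T_k)}{B(t,T_{k+1})}-1\big)$ are almost surely positive.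
   Context: $S_d$, $S_d^{++}$, $S_d^{--}$: real symmetric, strictly positive definite, strictly negative definite $d\times d$ matrices. For $u,v\in S_d$, $u\prec v$ means $u-v\in S_d^{--}$. $\Sigma$ is a stochastically continuous Markov process with values in $S_d^{++}$ on a filtered probability space $(\Omega,\mathcal F,(\mathcal F_t),\mathbb P)$ (here $\mathbb P$ plays the role of the terminal forward measure $\mathbb P_{T_N}$) such that for $0\le t\le s$ and every $u\in S_d$ with $\mathbb E[e^{-\operatorname{tr}[u\Sigma_s]}]<\infty$ for all $\Sigma_0\in S_d^{++}$, $\mathbb E[e^{-\operatorname{tr}[u\Sigma_s]}|\mathcal F_t]=\exp\{-\phi_{s-t}(u)-\operatorname{tr}[\psi_{s-t}(u)\Sigma_t]\}$, with deterministic $\phi$ real-valued, $\psi$ $S_d$-valued, $\phi_0(u)=0,\psi_0(u)=u$. $\mathcal I_T:=\{u\in S_d:\mathbb E[e^{-\operatorname{tr}[u\Sigma_T]}]<\infty\ \forall\Sigma_0\in S_d^{++}\}$. For $u\in\mathcal I_T$ and $t\in[0,T]$, $M^u_t:=\exp\{-\phi_{T-t}(u)-\operatorname{tr}[\psi_{T-t}(u)\Sigma_t]\}$ with $T=T_N$. *)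

theory Defs
  imports "HOL-Analysis.Analysis" "HOL-Probability.Probability" "HOL-Probability.Conditional_Expectation" "HOL-Probability.Stopping_Time"
begin

type_synonym 'd smat = "real^'d^'d"

definition sym_mat :: "'d::finite smat \<Rightarrow> bool" where
  "sym_mat A \<longleftrightarrow> transpose A = A"

definition pos_def :: "'d::finite smat \<Rightarrow> bool" where
  "pos_def A \<longleftrightarrow> sym_mat A \<and> (\<forall>x. x \<noteq> 0 \<longrightarrow> x \<bullet> (A *v x) > 0)"

definition neg_def :: "'d::finite smat \<Rightarrow> bool" where
  "neg_def A \<longleftrightarrow> sym_mat A \<and> (\<forall>x. x \<noteq> 0 \<longrightarrow> x \<bullet> (A *v x) < 0)"

definition mat_prec :: "'d::finite smat \<Rightarrow> 'd smat \<Rightarrow> bool" where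
  "mat_prec u v \<longleftrightarrow> neg_def (u - v)"

text \<open>The set I_T: symmetric u with finite exponential moment at time T for every
  initial value Sigma_0 in S_d^{++}. P x is the law of the process started at x.\<close>
definition I_set :: "('d::finite smat \<Rightarrow> 'a measure) \<Rightarrow> (real \<Rightarrow> 'a \<Rightarrow> 'd smat) \<Rightarrow> real \<Rightarrow> 'd smat set" where
  "I_set P Sig T = {u. sym_mat u \<and>
     (\<forall>y. pos_def y \<longrightarrow> integrable (P y) (\<lambda>\<omega>. exp (- trace (u ** Sig T \<omega>))))}"

definition Mproc :: "(real \<Rightarrow> 'd::finite smat \<Rightarrow> real) \<Rightarrow> (real \<Rightarrow> 'd smat \<Rightarrow> 'd smat)
    \<Rightarrow> (real \<Rightarrow> 'a \<Rightarrow> 'd smat) \<Rightarrow> real \<Rightarrow> 'd smat \<Rightarrow> real \<Rightarrow> 'a \<Rightarrow> real" where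
  "Mproc \<phi> \<psi> Sig T u t \<omega> = exp (- \<phi> (T - t) u - trace (\<psi> (T - t) u ** Sig t \<omega>))"

definition affine_process ::
  "'a measure \<Rightarrow> ('d::finite smat \<Rightarrow> 'a measure) \<Rightarrow> (real \<Rightarrow> 'a measure) \<Rightarrow> (real \<Rightarrow> 'a \<Rightarrow> 'd smat)
    \<Rightarrow> (real \<Rightarrow> 'd smat \<Rightarrow> real) \<Rightarrow> (real \<Rightarrow> 'd smat \<Rightarrow> 'd smat) \<Rightarrow> bool" where
  "affine_process \<Omega> P F Sig \<phi> \<psi> \<longleftrightarrow>
     (\<forall>x. pos_def x \<longrightarrow> prob_space (P x) \<and> sets (P x) = sets \<Omega>) \<and>
     filtration (space \<Omega>) F \<and>
     (\<forall>t\<ge>0. sets (F t) \<subseteq> sets \<Omega>) \<and>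
     (\<forall>x t. pos_def x \<longrightarrow> t \<ge> 0 \<longrightarrow> sigma_finite_subalgebra (P x) (F t)) \<and>
     (\<forall>t\<ge>0. Sig t \<in> borel_measurable (F t)) \<and>
     (\<forall>t\<ge>0. \<forall>\<omega>\<in>space \<Omega>. pos_def (Sig t \<omega>)) \<and>
     (\<forall>x. pos_def x \<longrightarrow> (AE \<omega> in P x. Sig 0 \<omega> = x)) \<and>
     \<comment> \<open>stochastic continuity\<close>
     (\<forall>x t \<epsilon>. pos_def x \<longrightarrow> t \<ge> 0 \<longrightarrow> \<epsilon> > 0 \<longrightarrow>
        ((\<lambda>s. measure (P x) {\<omega>\<in>space \<Omega>. norm (Sig s \<omega> - Sig t \<omega>) > \<epsilon>}) \<longlongrightarrow> 0)
          (at t within {0..})) \<and>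
     \<comment> \<open>Markov property\<close>
     (\<forall>x t s (f :: 'd smat \<Rightarrow> real). pos_def x \<longrightarrow> 0 \<le> t \<longrightarrow> t \<le> s \<longrightarrow>
        f \<in> borel_measurable borel \<longrightarrow> bounded (range f) \<longrightarrow>
        (AE \<omega> in P x. real_cond_exp (P x) (F t) (\<lambda>\<omega>. f (Sig s \<omega>)) \<omega> =
           real_cond_exp (P x) (vimage_algebra (space \<Omega>) (Sig t) borel) (\<lambda>\<omega>. f (Sig s \<omega>)) \<omega>)) \<and>
     \<comment> \<open>affine conditional Laplace transform\<close>
     (\<forall>x t s u. pos_def x \<longrightarrow> 0 \<le> t \<longrightarrow> t \<le> s \<longrightarrow> u \<in> I_set P Sig s \<longrightarrow>
        (AE \<omega> in P x. real_cond_exp (P x) (F t) (\<lambda>\<omega>. exp (- trace (u ** Sig s \<omega>))) \<omega> =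
           exp (- \<phi> (s - t) u - trace (\<psi> (s - t) u ** Sig t \<omega>)))) \<and>
     (\<forall>t u. sym_mat u \<longrightarrow> sym_mat (\<psi> t u)) \<and>
     (\<forall>u. \<phi> 0 u = 0 \<and> \<psi> 0 u = u)"

end

theory Submission
  imports Defs
begin


lemma trace_mult_sum: "trace (A ** S) = (\<Sum>i\<in>UNIV. \<Sum>j\<in>UNIV. A$i$j * S$j$i)"
  by (simp add: trace_def matrix_matrix_mult_def)
lemma trace_scale: "trace (((c::real) *\<^sub>R (u::real^'d^'d)) ** S) = c * trace (u ** S)"
  by (simp add: trace_mult_sum sum_distrib_left mult_ac)
lemma trace_diff_mult: "trace (((A::real^'d^'d) - B) ** S) = trace (A ** S) - trace (B ** S)"
  by (simp add: trace_mult_sum sum_subtractf algebra_simps)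
lemma scaleR_mat_mult_vec: "((c::real) *\<^sub>R (M::real^'n^'m)) *v x = c *\<^sub>R (M *v x)"
  by (simp add: vec_eq_iff matrix_vector_mult_def sum_distrib_left mult_ac)
lemma neg_def_scale: "neg_def u \<Longrightarrow> (c::real) > 0 \<Longrightarrow> neg_def (c *\<^sub>R u)"
  unfolding neg_def_def sym_mat_def
  by (simp add: transpose_scalar scaleR_mat_mult_vec mult_pos_neg)
lemma sym_scale: "sym_mat u \<Longrightarrow> sym_mat ((c::real) *\<^sub>R u)"
  unfolding sym_mat_def by (simp add: transpose_scalar)


definition psd :: "real^'d^'d \<Rightarrow> bool" where
  "psd A \<longleftrightarrow> transpose A = A \<and> (\<forall>x. 0 \<le> x \<bullet> (A *v x))"

lemma qf_sum: "x \<bullet> (A *v x) = (\<Sum>i\<in>UNIV. \<Sum>j\<in>UNIV. x$i * A$i$j * x$j)"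
  by (simp add: inner_vec_def matrix_vector_mult_def sum_distrib_left mult.assoc)

lemma sym_entry: "transpose A = A \<Longrightarrow> A$i$j = A$j$i"
  by (metis transpose_def vec_lambda_beta)



lemma psd_zero_row:
  fixes A :: "real^'d^'d"
  assumes "psd A" "A$i$i = 0"
  shows "A$i$j = 0"
proof (rule ccontr)
  assume ne: "A$i$j \<noteq> 0"
  then have ij: "i \<noteq> j" using assms by auto
  have sym: "A$j$i = A$i$j" using assms unfolding psd_def by (metis sym_entry)
  define t where "t = - (A$j$j + 1) / (2 * A$i$j)"
  define x where "x = (axis j 1 + t *\<^sub>R axis i 1 :: real^'d)"
  have "x \<bullet> (A *v x) = A$j$j + t * A$j$i + t * A$i$j + t*t * A$i$i"
    unfolding x_def
    by (simp add: matrix_vector_right_distrib matrix_vector_mult_scaleR inner_add_left inner_add_right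
        matrix_vector_mult_basis inner_axis' column_def algebra_simps)
  also have "\<dots> = -1" using ne sym assms(2) unfolding t_def by (simp add: field_simps)
  finally show False using assms(1) unfolding psd_def by (metis neg_0_le_iff_le not_one_le_zero)
qed

lemma psd_step:
  fixes A :: "real^'d^'d"
  assumes "psd A" "A$i$i > 0"
  defines "p \<equiv> (\<chi> j. A$j$i)"
  defines "A' \<equiv> A - (1 / A$i$i) *\<^sub>R (\<chi> a b. p$a * p$b)"
  shows "psd A'" "A'$i$i = 0" "\<And>j. A$j$j = 0 \<Longrightarrow> A'$j$j = 0"
    "A = A' + (1 / A$i$i) *\<^sub>R (\<chi> a b. p$a * p$b)"
proof -
  have symA: "\<And>a b. A$a$b = A$b$a" using assms(1) unfolding psd_def by (metis sym_entry)
  define d where "d = A$i$i"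
  show "A = A' + (1 / A$i$i) *\<^sub>R (\<chi> a b. p$a * p$b)" unfolding A'_def by simp
  show "A'$i$i = 0" unfolding A'_def p_def using assms(2) by (simp add: power2_eq_square)
  show "A'$j$j = 0" if "A$j$j = 0" for j
  proof -
    have "A$j$i = 0" using psd_zero_row[OF assms(1) that] .
    then show ?thesis unfolding A'_def p_def using that by simp
  qed
  show "psd A'"
    unfolding psd_def
  proof (intro conjI allI)
    show "transpose A' = A'"
      unfolding A'_def by (simp add: vec_eq_iff transpose_def symA mult.commute)
    fix x :: "real^'d"
    define c where "c = (p \<bullet> x) / d"
    define y where "y = x - c *\<^sub>R axis i 1"
    have e1: "axis i 1 \<bullet> (A *v x) = p \<bullet> x"
    proof -
      have "axis i 1 \<bullet> (A *v x) = (A *v x)$i" by (simp add: inner_axis')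
      also have "\<dots> = p \<bullet> x"
        by (simp add: matrix_vector_mult_def p_def inner_vec_def symA mult.commute)
      finally show ?thesis .
    qed
    have e2: "x \<bullet> (A *v axis i 1) = p \<bullet> x"
      by (simp add: matrix_vector_mult_basis column_def p_def inner_commute)
    have e3: "axis i 1 \<bullet> (A *v axis i 1) = d"
      by (simp add: matrix_vector_mult_basis column_def inner_axis' d_def)
    have "y \<bullet> (A *v y) = x \<bullet> (A *v x) - c * (x \<bullet> (A *v axis i 1)) - c * (axis i 1 \<bullet> (A *v x))
        + c * c * (axis i 1 \<bullet> (A *v axis i 1))"
      unfolding y_def
      by (simp add: matrix_vector_mult_diff_distrib matrix_vector_mult_scaleR inner_diff_left inner_diff_right
          algebra_simps)
    also have "\<dots> = x \<bullet> (A *v x) - (p \<bullet> x)^2 / d"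
      unfolding e1 e2 e3 c_def using assms(2) d_def by (simp add: field_simps power2_eq_square)
    finally have q: "y \<bullet> (A *v y) = x \<bullet> (A *v x) - (p \<bullet> x)^2 / d" .
    have o: "x \<bullet> ((\<chi> a b. p$a * p$b) *v x) = (p \<bullet> x)^2"
      unfolding qf_sum by (simp add: inner_vec_def power2_eq_square sum_product sum_distrib_left mult_ac)
    have "x \<bullet> (A' *v x) = x \<bullet> (A *v x) - (1/d) * (x \<bullet> ((\<chi> a b. p$a * p$b) *v x))"
      unfolding A'_def d_def
      by (simp only: matrix_vector_mult_diff_rdistrib inner_diff_right scaleR_mat_mult_vec inner_scaleR_right)
    then have "x \<bullet> (A' *v x) = x \<bullet> (A *v x) - (p \<bullet> x)^2 / d" unfolding o by simp
    then show "0 \<le> x \<bullet> (A' *v x)" using q assms(1) unfolding psd_def by metis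
  qed
qed

lemma trace_outer: "trace ((\<chi> a b. p$a * p$b) ** (S::real^'d^'d)) = p \<bullet> (S *v p)"
proof -
  have "trace ((\<chi> a b. p$a * p$b) ** S) = (\<Sum>i\<in>UNIV. \<Sum>j\<in>UNIV. p$i * p$j * S$j$i)"
    by (simp add: trace_mult_sum)
  also have "\<dots> = (\<Sum>j\<in>UNIV. \<Sum>i\<in>UNIV. p$j * S$j$i * p$i)"
    by (subst sum.swap) (simp add: mult_ac)
  also have "\<dots> = p \<bullet> (S *v p)" by (simp add: qf_sum)
  finally show ?thesis .
qed

lemma trace_add_scale: "trace ((A + c *\<^sub>R B) ** (S::real^'d^'d)) = trace (A ** S) + c * trace (B ** S)"
  by (simp add: trace_mult_sum sum.distrib sum_distrib_left algebra_simps)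

lemma psd_trace_pos_aux:
  fixes S :: "real^'d^'d"
  assumes S: "\<And>x. x \<noteq> 0 \<Longrightarrow> x \<bullet> (S *v x) > 0"
  shows "\<And>A. psd A \<Longrightarrow> card {j. A$j$j \<noteq> 0} = n \<Longrightarrow>
           0 \<le> trace (A ** S) \<and> (A \<noteq> 0 \<longrightarrow> 0 < trace (A ** S))"
proof (induction n rule: less_induct)
  case (less n A)
  show ?case
  proof (cases "\<exists>i. A$i$i \<noteq> 0")
    case False
    then have "A = 0" using psd_zero_row[OF less.prems(1)] by (simp add: vec_eq_iff)
    then show ?thesis by (simp add: trace_def)
  next
    case True
    then obtain i where i: "A$i$i \<noteq> 0" by blast
    have "axis i 1 \<bullet> (A *v axis i 1) \<ge> 0" using less.prems(1) unfolding psd_def by blast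
    then have "A$i$i \<ge> 0" by (simp add: inner_axis' matrix_vector_mult_basis column_def)
    then have ipos: "A$i$i > 0" using i by simp
    define p where "p = (\<chi> j. A$j$i)"
    define A' where "A' = A - (1 / A$i$i) *\<^sub>R (\<chi> a b. p$a * p$b)"
    note st = psd_step[OF less.prems(1) ipos, folded p_def, folded A'_def]
    have sub: "{j. A'$j$j \<noteq> 0} \<subseteq> {j. A$j$j \<noteq> 0} - {i}" using st(2,3) by auto
    have "card {j. A'$j$j \<noteq> 0} < n"
    proof -
      have "card {j. A'$j$j \<noteq> 0} \<le> card ({j. A$j$j \<noteq> 0} - {i})"
        by (rule card_mono[OF _ sub]) simp
      also have "\<dots> < card {j. A$j$j \<noteq> 0}" using i by (intro card_Diff1_less) auto
      finally show ?thesis using less.prems(2) by simp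
    qed
    from less.IH[OF this st(1) refl] have ih: "0 \<le> trace (A' ** S)" by simp
    have "p \<noteq> 0" using i by (auto simp: p_def vec_eq_iff)
    then have "p \<bullet> (S *v p) > 0" using S by simp
    have "trace (A ** S) = trace (A' ** S) + (1 / A$i$i) * (p \<bullet> (S *v p))"
      by (subst st(4)) (simp only: trace_add_scale trace_outer)
    also have "\<dots> > 0" using ih ipos \<open>p \<bullet> (S *v p) > 0\<close> by (simp add: add_nonneg_pos)
    finally show ?thesis by simp
  qed
qed

lemma psd_trace_pos:
  fixes S A :: "real^'d^'d"
  assumes "\<And>x. x \<noteq> 0 \<Longrightarrow> x \<bullet> (S *v x) > 0" "psd A" "A \<noteq> 0"
  shows "0 < trace (A ** S)"
  using psd_trace_pos_aux[OF assms(1) assms(2) refl] assms(3) by simp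



lemma exp_family:
  fixes g :: "'a \<Rightarrow> real"
  assumes fm: "finite_measure M" and int: "integrable M (\<lambda>\<omega>. exp (- g \<omega>))"
  shows "\<And>s. s \<in> {0..1} \<Longrightarrow> integrable M (\<lambda>\<omega>. exp (- (s * g \<omega>)))"
    and "continuous_on {0..1} (\<lambda>s. \<integral>\<omega>. exp (- (s * g \<omega>)) \<partial>M)"
proof -
  have hm[measurable]: "(\<lambda>\<omega>. exp (- g \<omega>)) \<in> borel_measurable M" using int by auto
  have meas: "(\<lambda>\<omega>. exp (- (s * g \<omega>))) \<in> borel_measurable M" for s
  proof -
    have "(\<lambda>\<omega>. exp (- g \<omega>) powr s) \<in> borel_measurable M" by measurable
    moreover have "exp (- g \<omega>) powr s = exp (- (s * g \<omega>))" for \<omega>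
      by (simp add: powr_def)
    ultimately show ?thesis by simp
  qed
  have wint: "integrable M (\<lambda>\<omega>. 1 + exp (- g \<omega>))"
    by (rule Bochner_Integration.integrable_add[OF finite_measure.integrable_const[OF fm] int])
  have bnd: "norm (exp (- (s * g \<omega>))) \<le> 1 + exp (- g \<omega>)" if "s \<in> {0..1}" for s \<omega>
  proof (cases "g \<omega> \<ge> 0")
    case True
    then have "- (s * g \<omega>) \<le> 0" using that by simp
    then have "exp (- (s * g \<omega>)) \<le> 1" by simp
    moreover have "0 < exp (- g \<omega>)" by simp
    ultimately show ?thesis using abs_of_pos[OF exp_gt_zero, of "- (s * g \<omega>)"] unfolding real_norm_def by linarith
  next
    case False
    then have "- (s * g \<omega>) \<le> - g \<omega>" using that
      by (simp add: mult_le_cancel_right2 mult.commute)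
    then have "exp (- (s * g \<omega>)) \<le> exp (- g \<omega>)" by simp
    moreover have "0 < exp (- g \<omega>)" by simp
    ultimately show ?thesis using abs_of_pos[OF exp_gt_zero, of "- (s * g \<omega>)"] unfolding real_norm_def by linarith
  qed
  show "integrable M (\<lambda>\<omega>. exp (- (s * g \<omega>)))" if "s \<in> {0..1}" for s
    using wint meas bnd[OF that]
    by (intro Bochner_Integration.integrable_bound[OF wint meas]) (auto intro: order_trans)
  show "continuous_on {0..1} (\<lambda>s. \<integral>\<omega>. exp (- (s * g \<omega>)) \<partial>M)"
  proof (rule continuous_on_sequentiallyI)
    fix u :: "nat \<Rightarrow> real" and a
    assume u: "\<forall>n. u n \<in> {0..1}" "a \<in> {0..1}" "u \<longlonglongrightarrow> a"
    show "(\<lambda>n. \<integral>\<omega>. exp (- (u n * g \<omega>)) \<partial>M) \<longlonglongrightarrow> \<integral>\<omega>. exp (- (a * g \<omega>)) \<partial>M"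
    proof (rule integral_dominated_convergence[where w="\<lambda>\<omega>. 1 + exp (- g \<omega>)"])
      show "(\<lambda>\<omega>. exp (- (a * g \<omega>))) \<in> borel_measurable M" by (rule meas)
      show "(\<lambda>\<omega>. exp (- (u n * g \<omega>))) \<in> borel_measurable M" for n by (rule meas)
      show "integrable M (\<lambda>\<omega>. 1 + exp (- g \<omega>))" by (rule wint)
      show "AE \<omega> in M. (\<lambda>n. exp (- (u n * g \<omega>))) \<longlonglongrightarrow> exp (- (a * g \<omega>))"
        using u(3) by (intro AE_I2 tendsto_intros) auto
      show "AE \<omega> in M. norm (exp (- (u n * g \<omega>))) \<le> 1 + exp (- g \<omega>)" for n
        using bnd u(1) by auto
    qed
  qed
qed

lemma neg_trace:
  fixes C S :: "real^'d^'d"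
  assumes C: "neg_def C" and S: "pos_def S"
  shows "trace (C ** S) < 0"
proof -
  have symC: "transpose C = C" using C unfolding neg_def_def sym_mat_def by simp
  have q: "x \<bullet> ((- C) *v x) = - (x \<bullet> (C *v x))" for x
    unfolding qf_sum by (simp add: sum_negf)
  have "psd (- C)"
    unfolding psd_def
  proof (intro conjI allI)
    show "transpose (- C) = - C"
      using symC by (simp add: vec_eq_iff transpose_def)
    fix x :: "real^'d"
    show "0 \<le> x \<bullet> ((- C) *v x)"
    proof (cases "x = 0")
      case True then show ?thesis by simp
    next
      case False then show ?thesis using C q unfolding neg_def_def by (simp add: less_imp_le)
    qed
  qed
  moreover have "- C \<noteq> 0"
  proof
    assume "- C = 0"
    then have "C = 0" by simp
    moreover have "(axis undefined 1 :: real^'d) \<noteq> 0" by (simp add: axis_eq_0_iff)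
    ultimately show False using C unfolding neg_def_def by (metis inner_zero_right matrix_vector_mult_0 less_irrefl)
  qed
  moreover have "\<And>x. x \<noteq> 0 \<Longrightarrow> x \<bullet> (S *v x) > 0" using S unfolding pos_def_def by simp
  ultimately have "0 < trace ((- C) ** S)" using psd_trace_pos by blast
  moreover have "trace ((- C) ** S) = - trace (C ** S)" by (simp add: trace_mult_sum sum_negf)
  ultimately show ?thesis by simp
qed
theorem mainTheorem2:
  fixes \<Omega> :: "'a measure" and P :: "'d::finite smat \<Rightarrow> 'a measure"
    and F :: "real \<Rightarrow> 'a measure" and Sig :: "real \<Rightarrow> 'a \<Rightarrow> 'd smat"
    and \<phi> :: "real \<Rightarrow> 'd smat \<Rightarrow> real" and \<psi> :: "real \<Rightarrow> 'd smat \<Rightarrow> 'd smat"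
    and x0 :: "'d smat"
    and N :: nat and Tn :: "nat \<Rightarrow> real" and T \<Delta>T :: real and B0 :: "nat \<Rightarrow> real"
  assumes aff: "affine_process \<Omega> P F Sig \<phi> \<psi>"
    and x0: "pos_def x0"
    and N: "N \<ge> 1"
    and dT: "\<Delta>T > 0"
    and tenor: "\<forall>k\<le>N. Tn k = real k * \<Delta>T"
    and TN: "T = Tn N"
    and B0pos: "\<forall>k\<le>N. B0 k > 0"
    and libor0: "\<forall>k\<in>{1..N}. (B0 (k - 1) / B0 k - 1) / \<Delta>T > 0"
  shows
    "((\<Squnion>u\<in>I_set P Sig T \<inter> {u. neg_def u}. ereal (integral\<^sup>L (P x0) (\<lambda>\<omega>. exp (- trace (u ** Sig T \<omega>)))))
        > ereal (B0 1 / B0 N) \<longrightarrow>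
      (\<exists>u :: nat \<Rightarrow> 'd smat.
         (\<forall>k\<in>{1..<N}. u k \<in> I_set P Sig T \<and> neg_def (u k)) \<and>
         u N = 0 \<and>
         (\<forall>k\<in>{1..<N}. mat_prec (u k) (u (Suc k))) \<and>
         (\<forall>k\<in>{1..N}. exp (- \<phi> T (u k) - trace (\<psi> T (u k) ** x0)) = B0 k / B0 N)))
     \<and>
     (\<forall>(u :: nat \<Rightarrow> 'd smat) (B :: real \<Rightarrow> nat \<Rightarrow> 'a \<Rightarrow> real).
        (\<forall>k\<in>{1..<N}. u k \<in> I_set P Sig T \<and> neg_def (u k)) \<and>
        u N = 0 \<and>
        (\<forall>k\<in>{1..<N}. mat_prec (u k) (u (Suc k))) \<and>
        (\<forall>k\<in>{1..N}. exp (- \<phi> T (u k) - trace (\<psi> T (u k) ** x0)) = B0 k / B0 N) \<and>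
        (\<forall>k\<in>{1..N}. \<forall>t\<in>{0..Tn k}. \<forall>\<omega>\<in>space \<Omega>. B t k \<omega> > 0) \<and>
        (\<forall>k\<in>{1..<N}. \<forall>t\<in>{0..Tn k}. \<forall>\<omega>\<in>space \<Omega>.
           B t k \<omega> / B t N \<omega> = Mproc \<phi> \<psi> Sig T (u k) t \<omega>)
        \<longrightarrow>
        (\<forall>k\<in>{1..<N}. \<forall>t\<in>{0..Tn k}. AE \<omega> in P x0. B t k \<omega> / B t (Suc k) \<omega> > 1))"
proof -
  note affd = aff[unfolded affine_process_def]
  have c1: "\<forall>x. pos_def x \<longrightarrow> prob_space (P x) \<and> sets (P x) = sets \<Omega>"
    using affd by (elim conjE) assumption
  have c4: "\<forall>x t. pos_def x \<longrightarrow> 0 \<le> t \<longrightarrow> sigma_finite_subalgebra (P x) (F t)"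
    using affd by (elim conjE) assumption
  have c6: "\<forall>t\<ge>0. \<forall>\<omega>\<in>space \<Omega>. pos_def (Sig t \<omega>)"
    using affd by (elim conjE) assumption
  have c7: "\<forall>x. pos_def x \<longrightarrow> (AE \<omega> in P x. Sig 0 \<omega> = x)"
    using affd by (elim conjE) assumption
  have Pprob: "\<And>x. pos_def x \<Longrightarrow> prob_space (P x)" using c1 by blast
  have Psets: "\<And>x. pos_def x \<Longrightarrow> sets (P x) = sets \<Omega>" using c1 by blast
  have Psub: "\<And>x t. pos_def x \<Longrightarrow> t \<ge> 0 \<Longrightarrow> sigma_finite_subalgebra (P x) (F t)"
    using c4 by blast
  have Spos: "\<And>t \<omega>. t \<ge> 0 \<Longrightarrow> \<omega> \<in> space \<Omega> \<Longrightarrow> pos_def (Sig t \<omega>)" using c6 by blast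
  have Sinit: "\<And>x. pos_def x \<Longrightarrow> AE \<omega> in P x. Sig 0 \<omega> = x" using c7 by blast
  have L: "\<forall>x t s u. pos_def x \<longrightarrow> 0 \<le> t \<longrightarrow> t \<le> s \<longrightarrow> u \<in> I_set P Sig s \<longrightarrow>
        (AE \<omega> in P x. real_cond_exp (P x) (F t) (\<lambda>\<omega>. exp (- trace (u ** Sig s \<omega>))) \<omega> =
           exp (- \<phi> (s - t) u - trace (\<psi> (s - t) u ** Sig t \<omega>)))"
    using affd by (elim conjE) assumption
  note Lap = L[rule_format]
  have Tpos: "T > 0" using TN tenor N dT by simp
  have space_eq: "space (P x0) = space \<Omega>" using sets_eq_imp_space_eq[OF Psets[OF x0]] .
  have fmP: "\<And>y. pos_def y \<Longrightarrow> finite_measure (P y)"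
    using Pprob prob_space.finite_measure by blast
  have Eform: "(\<integral>\<omega>. exp (- trace (u ** Sig T \<omega>)) \<partial>P x0) = exp (- \<phi> T u - trace (\<psi> T u ** x0))"
    if u: "u \<in> I_set P Sig T" for u
  proof -
    interpret sigma_finite_subalgebra "P x0" "F 0" using Psub x0 by simp
    interpret prob_space "P x0" using Pprob x0 by simp
    have int: "integrable (P x0) (\<lambda>\<omega>. exp (- trace (u ** Sig T \<omega>)))"
      using u x0 unfolding I_set_def by blast
    have ae: "AE \<omega> in P x0. real_cond_exp (P x0) (F 0) (\<lambda>\<omega>. exp (- trace (u ** Sig T \<omega>))) \<omega>
         = exp (- \<phi> T u - trace (\<psi> T u ** x0))"
      using Lap[OF x0 order_refl Tpos[THEN less_imp_le] u] Sinit[OF x0] by eventually_elim simp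
    have "(\<integral>\<omega>. exp (- trace (u ** Sig T \<omega>)) \<partial>P x0)
        = (\<integral>\<omega>. real_cond_exp (P x0) (F 0) (\<lambda>\<omega>. exp (- trace (u ** Sig T \<omega>))) \<omega> \<partial>P x0)"
      using real_cond_exp_int(2)[OF int] by simp
    also have "\<dots> = (\<integral>\<omega>. exp (- \<phi> T u - trace (\<psi> T u ** x0)) \<partial>P x0)"
      by (rule integral_cong_AE)
        (use ae real_cond_exp_int(1)[OF int] in \<open>auto intro: borel_measurable_integrable\<close>)
    also have "\<dots> = exp (- \<phi> T u - trace (\<psi> T u ** x0))" by (simp add: prob_space)
    finally show ?thesis .
  qed
  have Bdec: "B0 k < B0 (k - 1)" if "k \<in> {1..N}" for k
  proof -
    have "(B0 (k - 1) / B0 k - 1) / \<Delta>T > 0" using libor0 that by blast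
    then have "B0 (k - 1) / B0 k > 1" using dT by (simp add: zero_less_divide_iff)
    then show ?thesis using B0pos that by (simp add: less_divide_eq)
  qed
  have Bstrict: "\<And>j m. j + Suc m \<le> N \<Longrightarrow> B0 (j + Suc m) < B0 j"
  proof -
    fix j m show "j + Suc m \<le> N \<Longrightarrow> B0 (j + Suc m) < B0 j"
    proof (induction m)
      case 0 then show ?case using Bdec[of "Suc j"] by simp
    next
      case (Suc m)
      then have "B0 (j + Suc m) < B0 j" by simp
      moreover have "B0 (j + Suc (Suc m)) < B0 (j + Suc m)" using Bdec[of "j + Suc (Suc m)"] Suc.prems by simp
      ultimately show ?case by simp
    qed
  qed
  have BNpos: "B0 N > 0" using B0pos by simp
  define v where "v k = B0 k / B0 N" for k
  have vgt1: "v k > 1" if "k \<in> {1..<N}" for k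
  proof -
    have "B0 N < B0 k" using Bstrict[of k "N - Suc k"] that by simp
    then show ?thesis unfolding v_def using BNpos by simp
  qed
  have vdec: "v (Suc k) < v k" if "Suc k \<le> N" for k
    unfolding v_def using Bstrict[of k 0] that BNpos by (simp add: divide_strict_right_mono)
  have vle1: "v k \<le> v 1" if "k \<in> {1..<N}" for k
  proof (cases "k = 1")
    case False
    then have kk: "1 + Suc (k - 2) = k" using that by auto
    then have "B0 k < B0 1" using Bstrict[of 1 "k - 2"] that by simp
    then show ?thesis unfolding v_def using BNpos by (simp add: divide_right_mono)
  qed simp
  have part1: "((\<Squnion>u\<in>I_set P Sig T \<inter> {u. neg_def u}. ereal (integral\<^sup>L (P x0) (\<lambda>\<omega>. exp (- trace (u ** Sig T \<omega>)))))
        > ereal (B0 1 / B0 N) \<longrightarrow>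
      (\<exists>u :: nat \<Rightarrow> 'd smat.
         (\<forall>k\<in>{1..<N}. u k \<in> I_set P Sig T \<and> neg_def (u k)) \<and>
         u N = 0 \<and>
         (\<forall>k\<in>{1..<N}. mat_prec (u k) (u (Suc k))) \<and>
         (\<forall>k\<in>{1..N}. exp (- \<phi> T (u k) - trace (\<psi> T (u k) ** x0)) = B0 k / B0 N)))"
  proof
    assume "(\<Squnion>u\<in>I_set P Sig T \<inter> {u. neg_def u}. ereal (integral\<^sup>L (P x0) (\<lambda>\<omega>. exp (- trace (u ** Sig T \<omega>)))))
        > ereal (B0 1 / B0 N)"
    then obtain us where us: "us \<in> I_set P Sig T" "neg_def us"
      and gt: "ereal (B0 1 / B0 N) < ereal (integral\<^sup>L (P x0) (\<lambda>\<omega>. exp (- trace (us ** Sig T \<omega>))))"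
      unfolding less_SUP_iff by blast
    define g where "g \<omega> = trace (us ** Sig T \<omega>)" for \<omega>
    define f where "f s = (\<integral>\<omega>. exp (- (s * g \<omega>)) \<partial>P x0)" for s
    have intus: "integrable (P y) (\<lambda>\<omega>. exp (- g \<omega>))" if "pos_def y" for y
      using us(1) that unfolding I_set_def g_def by blast
    have cont: "continuous_on {0..1} f"
      unfolding f_def by (rule exp_family(2)[OF fmP[OF x0] intus[OF x0]])
    have f0: "f 0 = 1"
      unfolding f_def using Pprob[OF x0] by (simp add: prob_space.prob_space)
    have f1: "f 1 > v 1" using gt unfolding f_def g_def v_def by simp
    define Z where "Z k = {s \<in> {0..1}. f s = v k}" for k
    define sk where "sk k = Inf (Z k)" for k
    have Zcl: "closed (Z k)" for k
      unfolding Z_def by (rule continuous_closed_preimage_constant[OF cont closed_atLeastAtMost])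
    have Zbdd: "bdd_below (Z k)" for k unfolding Z_def by (rule bdd_belowI[of _ 0]) auto
    have skprop: "sk k \<in> {0..1} \<and> f (sk k) = v k \<and> 0 < sk k" if k: "k \<in> {1..<N}" for k
    proof -
      have "\<exists>x. 0 \<le> x \<and> x \<le> 1 \<and> f x = v k"
        by (rule IVT') (use f0 f1 vgt1[OF k] vle1[OF k] cont in auto)
      then have ne: "Z k \<noteq> {}" unfolding Z_def by auto
      have "sk k \<in> Z k" unfolding sk_def by (rule closed_contains_Inf[OF ne Zbdd Zcl])
      then have "sk k \<in> {0..1}" "f (sk k) = v k" unfolding Z_def by auto
      moreover have "sk k \<noteq> 0" using \<open>f (sk k) = v k\<close> f0 vgt1[OF k] by auto
      ultimately show ?thesis by auto
    qed
    have sdec: "sk (Suc k) < sk k" if k: "k \<in> {1..<N}" and k1: "Suc k < N" for k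
    proof -
      have k1': "Suc k \<in> {1..<N}" using k1 by simp
      have sk: "sk k \<in> {0..1}" "f (sk k) = v k" using skprop[OF k] by auto
      have "\<exists>x. 0 \<le> x \<and> x \<le> sk k \<and> f x = v (Suc k)"
        by (rule IVT') (use f0 vgt1[OF k1'] vdec[of k] k1 sk cont in \<open>auto intro: continuous_on_subset\<close>)
      then obtain \<sigma> where \<sigma>: "0 \<le> \<sigma>" "\<sigma> \<le> sk k" "f \<sigma> = v (Suc k)" by blast
      then have "\<sigma> \<in> Z (Suc k)" unfolding Z_def using sk by auto
      then have "sk (Suc k) \<le> \<sigma>" unfolding sk_def by (rule cInf_lower[OF _ Zbdd])
      moreover have "sk (Suc k) \<noteq> sk k" using skprop[OF k1'] sk vdec[of k] k1 by auto
      ultimately show ?thesis using \<sigma> by simp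
    qed
    define u where "u k = (if k = N then 0 else sk k *\<^sub>R us)" for k
    have uI: "u k \<in> I_set P Sig T \<and> neg_def (u k)" if k: "k \<in> {1..<N}" for k
    proof -
      have uk: "u k = sk k *\<^sub>R us" using k unfolding u_def by simp
      have "integrable (P y) (\<lambda>\<omega>. exp (- trace (u k ** Sig T \<omega>)))" if "pos_def y" for y
        using exp_family(1)[OF fmP[OF that] intus[OF that], of "sk k"] skprop[OF k]
        unfolding uk trace_scale g_def by simp
      moreover have "sym_mat (u k)" unfolding uk
        using us(2) unfolding neg_def_def by (simp add: sym_scale)
      moreover have "neg_def (u k)" unfolding uk using neg_def_scale us(2) skprop[OF k] by blast
      ultimately show ?thesis unfolding I_set_def by blast
    qed
    show "\<exists>u :: nat \<Rightarrow> 'd smat.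
         (\<forall>k\<in>{1..<N}. u k \<in> I_set P Sig T \<and> neg_def (u k)) \<and>
         u N = 0 \<and>
         (\<forall>k\<in>{1..<N}. mat_prec (u k) (u (Suc k))) \<and>
         (\<forall>k\<in>{1..N}. exp (- \<phi> T (u k) - trace (\<psi> T (u k) ** x0)) = B0 k / B0 N)"
    proof -
    have p3: "\<forall>k\<in>{1..<N}. mat_prec (u k) (u (Suc k))"
    proof
      fix k assume k: "k \<in> {1..<N}"
      show "mat_prec (u k) (u (Suc k))"
      proof (cases "Suc k = N")
        case True
        then show ?thesis unfolding mat_prec_def using uI[OF k] by (simp add: u_def)
      next
        case False
        then have k1: "Suc k < N" using k by simp
        have "u k - u (Suc k) = (sk k - sk (Suc k)) *\<^sub>R us"
          using k k1 unfolding u_def by (simp add: scaleR_diff_left)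
        then show ?thesis unfolding mat_prec_def
          using neg_def_scale[OF us(2)] sdec[OF k k1] by simp
      qed
    qed
    have p4: "\<forall>k\<in>{1..N}. exp (- \<phi> T (u k) - trace (\<psi> T (u k) ** x0)) = B0 k / B0 N"
    proof
      fix k assume k: "k \<in> {1..N}"
      show "exp (- \<phi> T (u k) - trace (\<psi> T (u k) ** x0)) = B0 k / B0 N"
      proof (cases "k = N")
        case True
        have t0: "trace (0 ** X) = 0" for X :: "'d smat" by (simp add: trace_def)
        have t00: "trace (0 :: 'd smat) = 0" by (simp add: trace_def)
        have "(0 :: 'd smat) \<in> I_set P Sig T"
          unfolding I_set_def sym_mat_def
          using fmP by (auto simp: t0 vec_eq_iff transpose_def intro: finite_measure.integrable_const)
        from Eform[OF this] have "exp (- \<phi> T 0 - trace (\<psi> T 0 ** x0)) = 1"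
          using Pprob[OF x0] by (simp add: t0 t00 prob_space.prob_space)
        then show ?thesis using True BNpos by (simp add: u_def)
      next
        case False
        then have k': "k \<in> {1..<N}" using k by simp
        have "exp (- \<phi> T (u k) - trace (\<psi> T (u k) ** x0)) = f (sk k)"
          unfolding Eform[OF uI[OF k', THEN conjunct1], symmetric] f_def g_def
          using False by (simp add: u_def trace_scale)
        then show ?thesis using skprop[OF k'] unfolding v_def by simp
      qed
    qed
    have p2: "u N = 0" unfolding u_def by simp
    show ?thesis using uI p2 p3 p4 by blast
    qed
  qed
  show ?thesis
    apply (intro conjI[OF part1] allI impI ballI)
    subgoal premises prems for u B k t
    proof -
      have uI: "\<forall>k\<in>{1..<N}. u k \<in> I_set P Sig T \<and> neg_def (u k)" using prems(1) by blast
      have uN: "u N = 0" using prems(1) by blast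
      have prec: "\<forall>k\<in>{1..<N}. mat_prec (u k) (u (Suc k))" using prems(1) by blast
      have Bpos: "\<forall>k\<in>{1..N}. \<forall>t\<in>{0..Tn k}. \<forall>\<omega>\<in>space \<Omega>. B t k \<omega> > 0" using prems(1) by blast
      have Bm: "\<forall>k\<in>{1..<N}. \<forall>t\<in>{0..Tn k}. \<forall>\<omega>\<in>space \<Omega>.
           B t k \<omega> / B t N \<omega> = Mproc \<phi> \<psi> Sig T (u k) t \<omega>" using prems(1) by blast
      have k: "k \<in> {1..<N}" using prems(2) .
      have t: "t \<in> {0..Tn k}" using prems(3) .
      have t0: "0 \<le> t" using t by simp
      have TnT: "Tn j \<le> T" if "j \<le> N" for j using tenor that TN dT by simp
      have Tnmono: "Tn k \<le> Tn j" if "k \<le> j" "j \<le> N" for j using tenor that k dT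
        by (simp add: mult_right_mono)
      have tT: "t \<le> T" using t TnT[of k] k by simp
      interpret sigma_finite_subalgebra "P x0" "F t" using Psub x0 t0 by simp
      define fk where "fk j \<omega> = exp (- trace (u j ** Sig T \<omega>))" for j \<omega>
      have intk: "integrable (P x0) (fk j)" if "j \<in> {1..<N}" for j
        using uI that x0 unfolding I_set_def fk_def by blast
      have aek: "AE \<omega> in P x0. real_cond_exp (P x0) (F t) (fk j) \<omega> = Mproc \<phi> \<psi> Sig T (u j) t \<omega>"
        if "j \<in> {1..<N}" for j
        using Lap[OF x0 t0 tT, of "u j"] uI that unfolding fk_def Mproc_def by blast
      have sp: "AE \<omega> in P x0. \<omega> \<in> space \<Omega>" using AE_space space_eq by metis
      have STpos: "pos_def (Sig T \<omega>)" if "\<omega> \<in> space \<Omega>" for \<omega>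
        using Spos that Tpos by simp
      have BNp: "B t N \<omega> > 0" if "\<omega> \<in> space \<Omega>" for \<omega>
        using Bpos that t TnT[of k] k N TN by auto
      show ?thesis
      proof (cases "Suc k = N")
        case True
        have "AE \<omega> in P x0. fk k \<omega> > 1"
          using sp
        proof eventually_elim
          case (elim \<omega>)
          have "trace (u k ** Sig T \<omega>) < 0" using neg_trace uI k STpos[OF elim] by blast
          then show ?case unfolding fk_def by simp
        qed
        then have "AE \<omega> in P x0. real_cond_exp (P x0) (F t) (fk k) \<omega> > 1"
          by (rule real_cond_exp_gr_c[OF intk[OF k]])
        then show ?thesis using aek[OF k] sp
        proof eventually_elim
          case (elim \<omega>)
          then show ?case using Bm k t True by auto
        qed
      next
        case False
        then have k1: "Suc k \<in> {1..<N}" using k by simp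
        have "AE \<omega> in P x0. fk (Suc k) \<omega> < fk k \<omega>"
          using sp
        proof eventually_elim
          case (elim \<omega>)
          have "trace ((u k - u (Suc k)) ** Sig T \<omega>) < 0"
            using neg_trace prec k STpos[OF elim] unfolding mat_prec_def by blast
          then show ?case unfolding fk_def trace_diff_mult by simp
        qed
        then have "AE \<omega> in P x0. real_cond_exp (P x0) (F t) (fk (Suc k)) \<omega>
             < real_cond_exp (P x0) (F t) (fk k) \<omega>"
          by (rule real_cond_exp_mono_strict[OF _ intk[OF k1] intk[OF k]])
        then show ?thesis using aek[OF k] aek[OF k1] sp
        proof eventually_elim
          case (elim \<omega>)
          have tk1: "t \<in> {0..Tn (Suc k)}" using t Tnmono[of "Suc k"] k1 by auto
          have e1: "B t k \<omega> / B t N \<omega> = Mproc \<phi> \<psi> Sig T (u k) t \<omega>" using Bm k t elim by blast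
          have e2: "B t (Suc k) \<omega> / B t N \<omega> = Mproc \<phi> \<psi> Sig T (u (Suc k)) t \<omega>"
            using Bm k1 tk1 elim by blast
          have pos2: "Mproc \<phi> \<psi> Sig T (u (Suc k)) t \<omega> > 0" unfolding Mproc_def by simp
          have lt: "Mproc \<phi> \<psi> Sig T (u (Suc k)) t \<omega> < Mproc \<phi> \<psi> Sig T (u k) t \<omega>" using elim by simp
          have bN: "B t N \<omega> > 0" using BNp elim by blast
          have bk1: "B t (Suc k) \<omega> > 0" using Bpos k1 tk1 elim by auto
          have "B t k \<omega> / B t (Suc k) \<omega> = (B t k \<omega> / B t N \<omega>) / (B t (Suc k) \<omega> / B t N \<omega>)"
            using bN bk1 by (simp add: field_simps)
          also have "\<dots> = Mproc \<phi> \<psi> Sig T (u k) t \<omega> / Mproc \<phi> \<psi> Sig T (u (Suc k)) t \<omega>"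
            using e1 e2 by simp
          also have "\<dots> > 1" using pos2 lt by simp
          finally show ?case .
        qed
      qed
    qed
    done
qed
end
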